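(* For every $n\in\mathbb N$, $C_{L_n}\le C_{L_{n+1}}$.
   Context: $L_n$ is the path graph with vertices $\{1,\dots,n\}$ and edges $\{j,j+1\}$, with distance $|i-j|$. A measure on $L_n$ is a weight function $\mu:\{1,\dots,n\}\to(0,\infty)$, $\mu(A)=\sum_{v\in A}\mu(v)$. Closed balls: $B(x,r)=\{y:|x-y|\le r\}$. $C_\mu=\sup\{\mu(B(x,2k+1))/\mu(B(x,k)):1\le x\le n,\ k\ge0\}$ and $C_{L_n}=\inf_\mu C_\mu$. *)

theory Defs
  imports "HOL-Analysis.Analysis"
begin

text \<open>Path graph L_n: vertex set {1..n}, distance |i - j|.\<close>

definition path_ball :: "nat \<Rightarrow> nat \<Rightarrow> nat \<Rightarrow> nat set" where
  "path_ball n x r = {y \<in> {1..n}. nat \<bar>int x - int y\<bar> \<le> r}"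

definition path_measure :: "(nat \<Rightarrow> real) \<Rightarrow> nat set \<Rightarrow> real" where
  "path_measure \<mu> A = (\<Sum>v\<in>A. \<mu> v)"

text \<open>A measure on L_n: strictly positive weights on {1..n}
  (values outside {1..n} are irrelevant).\<close>
definition is_path_measure :: "nat \<Rightarrow> (nat \<Rightarrow> real) \<Rightarrow> bool" where
  "is_path_measure n \<mu> \<longleftrightarrow> (\<forall>v\<in>{1..n}. \<mu> v > 0)"

definition doubling_const :: "nat \<Rightarrow> (nat \<Rightarrow> real) \<Rightarrow> real" where
  "doubling_const n \<mu> =
     Sup {path_measure \<mu> (path_ball n x (2*k+1)) / path_measure \<mu> (path_ball n x k)
          | x k. x \<in> {1..n}}"

definition path_doubling_const :: "nat \<Rightarrow> real" where
  "path_doubling_const n = Inf (doubling_const n ` {\<mu>. is_path_measure n \<mu>})"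

end

theory Submission
  imports Defs
begin

definition fdel :: "nat \<Rightarrow> nat \<Rightarrow> nat" where
  "fdel m i = (if i < m then i else Suc i)"
definition gpos :: "nat \<Rightarrow> nat \<Rightarrow> nat \<Rightarrow> nat" where
  "gpos m a b = (if b \<le> m then b else if m \<le> a then a else m)"

lemma sum_fdel:
  fixes V :: "nat \<Rightarrow> real"
  shows "a \<le> b \<Longrightarrow> (\<Sum>i\<in>{a..<b}. V (fdel m i)) + V (gpos m a b) = (\<Sum>i\<in>{a..<Suc b}. V i)"
proof (induction b)
  case 0
  then show ?case by (simp add: gpos_def)
next
  case (Suc b)
  show ?case
  proof (cases "a = Suc b")
    case True
    then show ?thesis by (simp add: gpos_def)
  next
    case False
    then have ab: "a \<le> b" using Suc.prems by simp
    have e1: "(\<Sum>i\<in>{a..<Suc b}. V (fdel m i)) = (\<Sum>i\<in>{a..<b}. V (fdel m i)) + V (fdel m b)"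
      using ab by (simp add: sum.atLeastLessThan_Suc)
    have e2: "(\<Sum>i\<in>{a..<Suc (Suc b)}. V i) = (\<Sum>i\<in>{a..<Suc b}. V i) + V (Suc b)"
      using ab by (simp add: sum.atLeastLessThan_Suc)
    have key: "V (fdel m b) + V (gpos m a (Suc b)) = V (gpos m a b) + V (Suc b)"
      using ab by (cases "b = m") (auto simp: fdel_def gpos_def)
    show ?thesis using e1 e2 key Suc.IH[OF ab] by linarith
  qed
qed

lemma alg:
  fixes A B d e c :: real
  assumes "0 \<le> A" "0 \<le> A + B" "A*d \<le> B*e" "2*e \<le> d" "0 \<le> e" "e = 0 \<Longrightarrow> A = 0" "c \<le> 3"
  shows "c*A \<le> A + B"
proof (cases "e = 0")
  case True
  then show ?thesis using assms by simp
next
  case False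
  then have ep: "0 < e" using assms by simp
  have "A*(2*e) \<le> A*d" using assms by (simp add: mult_left_mono)
  then have "(2*A)*e \<le> B*e" using assms by (simp add: algebra_simps)
  then have "2*A \<le> B" using ep by simp
  moreover have "c*A \<le> 3*A" using assms by (simp add: mult_right_mono)
  ultimately show ?thesis by linarith
qed

locale dm =
  fixes M :: nat and V :: "nat \<Rightarrow> real" and m :: nat and c :: real
  assumes M2: "2 \<le> M"
    and pos: "\<And>i. 1 \<le> i \<Longrightarrow> i \<le> M \<Longrightarrow> 0 < V i"
    and zero0: "V 0 = 0"
    and zeroM: "\<And>i. M < i \<Longrightarrow> V i = 0"
    and m1: "1 \<le> m" and mM: "m \<le> M"
    and vmax: "\<And>i. V i \<le> V m"
    and cons: "\<And>z r. 1 \<le> z \<Longrightarrow> z \<le> M \<Longrightarrow>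
        (\<Sum>i\<in>{z-(2*r+1)..<z+2*r+2}. V i) \<le> c * (\<Sum>i\<in>{z-r..<z+r+1}. V i)"
    and c3: "c \<le> 3"
begin

lemma nonneg: "0 \<le> V i"
proof (cases "i = 0")
  case True then show ?thesis using zero0 by simp
next
  case False
  show ?thesis
  proof (cases "M < i")
    case True then show ?thesis using zeroM by simp
  next
    case F: False
    then show ?thesis using pos[of i] False by simp
  qed
qed

lemma k0: assumes "1 \<le> j" "j \<le> M" shows "V (j-1) + V (j+1) \<le> (c-1) * V j"
proof -
  have h: "(\<Sum>i\<in>{j-1..<j+2}. V i) \<le> c * (\<Sum>i\<in>{j..<j+1}. V i)"
    using cons[of j 0] assms by simp
  have eq: "{j-1..<j+2} = {j-1, j, j+1}" using assms by auto
  have "(\<Sum>i\<in>{j-1..<j+2}. V i) = V (j-1) + V j + V (j+1)"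
    using assms by (cases j) (simp_all add: sum.atLeastLessThan_Suc)
  then show ?thesis using h by (simp add: algebra_simps)
qed

lemma c1: "1 \<le> c"
proof -
  have "V 0 + V (Suc (Suc 0)) \<le> (c-1) * V 1" using k0[of 1] M2 by simp
  moreover have "0 < V 1" using pos[of 1] M2 by simp
  ultimately have "0 \<le> (c-1) * V 1" using nonneg[of "Suc (Suc 0)"] zero0 by linarith
  then show ?thesis using \<open>0 < V 1\<close> by (simp add: zero_le_mult_iff)
qed

lemma conc: assumes "1 \<le> j" "j \<le> M" shows "V (j-1) + V (j+1) \<le> 2 * V j"
proof -
  have "(c-1) * V j \<le> 2 * V j" using c3 nonneg[of j] by (simp add: mult_right_mono)
  then show ?thesis using k0[OF assms] by linarith
qed

lemma dmono: assumes "l1 \<le> l2" "l2 \<le> M" shows "V (Suc l2) - V l2 \<le> V (Suc l1) - V l1"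
  using assms
proof (induction l2 rule: dec_induct)
  case base then show ?case by simp
next
  case (step l)
  have "V l + V (Suc (Suc l)) \<le> 2 * V (Suc l)" using conc[of "Suc l"] step.prems by simp
  then show ?case using step by simp
qed

lemma three:
  assumes "i \<le> j" "j \<le> k" "k \<le> M+1"
  shows "(V k - V j) * real (j-i) \<le> (V j - V i) * real (k-j)"
proof (cases "i = j")
  case True then show ?thesis by simp
next
  case False
  then have j1: "1 \<le> j" using assms by simp
  define d where "d = V j - V (j-1)"
  have A: "V k - V j \<le> real (k-j) * d"
  proof -
    have "V k - V j = (\<Sum>l = j..<k. V (Suc l) - V l)" using assms by (simp add: sum_Suc_diff')
    also have "\<dots> \<le> (\<Sum>l = j..<k. d)"
    proof (rule sum_mono)
      fix l assume "l \<in> {j..<k}"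
      then have "V (Suc l) - V l \<le> V (Suc (j-1)) - V (j-1)" using assms j1 by (intro dmono) auto
      then show "V (Suc l) - V l \<le> d" using j1 by (simp add: d_def)
    qed
    finally show ?thesis by simp
  qed
  have B: "real (j-i) * d \<le> V j - V i"
  proof -
    have "V j - V i = (\<Sum>l = i..<j. V (Suc l) - V l)" using assms by (simp add: sum_Suc_diff')
    moreover have "(\<Sum>l = i..<j. d) \<le> (\<Sum>l = i..<j. V (Suc l) - V l)"
    proof (rule sum_mono)
      fix l assume "l \<in> {i..<j}"
      then have "V (Suc (j-1)) - V (j-1) \<le> V (Suc l) - V l" using assms j1 by (intro dmono) auto
      then show "d \<le> V (Suc l) - V l" using j1 by (simp add: d_def)
    qed
    ultimately show ?thesis by simp
  qed
  have "(V k - V j) * real (j-i) \<le> (real (k-j) * d) * real (j-i)"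
    using A by (simp add: mult_right_mono)
  also have "\<dots> = (real (j-i) * d) * real (k-j)" by (simp add: algebra_simps)
  also have "\<dots> \<le> (V j - V i) * real (k-j)" using B by (simp add: mult_right_mono)
  finally show ?thesis .
qed

lemma mono_l: assumes "i \<le> j" "j \<le> m" shows "V i \<le> V j"
proof (cases "j = m")
  case True then show ?thesis using vmax by simp
next
  case False
  have "(V m - V j) * real (j-i) \<le> (V j - V i) * real (m-j)"
    using three[of i j m] assms mM by simp
  moreover have "0 \<le> (V m - V j) * real (j-i)" using vmax[of j] by simp
  moreover have "0 < real (m-j)" using False assms by simp
  ultimately have "0 \<le> (V j - V i) * real (m-j)" by linarith
  then show ?thesis using \<open>0 < real (m-j)\<close> by (simp add: zero_le_mult_iff)
qed

lemma mono_r: assumes "m \<le> i" "i \<le> j" shows "V j \<le> V i"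
proof (cases "M + 1 < j")
  case True then show ?thesis using zeroM[of j] nonneg[of i] by simp
next
  case F: False
  show ?thesis
  proof (cases "i = m")
    case True then show ?thesis using vmax by simp
  next
    case False
    have "(V j - V i) * real (i-m) \<le> (V i - V m) * real (j-i)"
      using three[of m i j] assms F by simp
    moreover have "(V i - V m) * real (j-i) \<le> 0" using vmax[of i] by (simp add: mult_le_0_iff)
    moreover have "0 < real (i-m)" using False assms by simp
    ultimately have "(V j - V i) * real (i-m) \<le> 0" by linarith
    then show ?thesis using \<open>0 < real (i-m)\<close> by (simp add: mult_le_0_iff)
  qed
qed

lemma max_g: assumes "a \<le> j" "j \<le> b" shows "V j \<le> V (gpos m a b)"
proof -
  consider "b \<le> m" | "\<not> b \<le> m" "m \<le> a" | "\<not> b \<le> m" "\<not> m \<le> a" by blast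
  then show ?thesis
  proof cases
    case 1 then show ?thesis using assms mono_l[of j b] by (simp add: gpos_def)
  next
    case 2 then show ?thesis using assms mono_r[of a j] by (simp add: gpos_def)
  next
    case 3 then show ?thesis using vmax[of j] by (simp add: gpos_def)
  qed
qed


lemma left_good:
  assumes "s \<le> p" "p \<le> m" "p = 0 \<or> p - s \<le> 2*(m-p)"
  shows "(\<Sum>i\<in>{s..<p}. V i) \<le> (c-1) * (\<Sum>i\<in>{p..<m}. V i)"
proof (cases "p = 0")
  case True
  have "0 \<le> (c-1) * (\<Sum>i\<in>{p..<m}. V i)" using c1 by (simp add: nonneg sum_nonneg)
  then show ?thesis using True assms by simp
next
  case False
  then have ps: "p - s \<le> 2*(m-p)" "1 \<le> p" using assms by auto
  define w where "w = V (p-1)"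
  have w0: "0 \<le> w" by (simp add: w_def nonneg)
  have h1: "(\<Sum>i\<in>{s..<p}. V i) \<le> real (card {s..<p}) * w"
  proof (rule sum_bounded_above)
    fix i assume "i \<in> {s..<p}"
    then show "V i \<le> w" unfolding w_def using assms by (intro mono_l) auto
  qed
  have h2: "real (card {p..<m}) * (2*w) \<le> (\<Sum>i\<in>{p..<m}. (c-1) * V i)"
  proof (rule sum_bounded_below)
    fix i assume i: "i \<in> {p..<m}"
    have "V (i-1) + V (i+1) \<le> (c-1) * V i" using i ps mM by (intro k0) auto
    moreover have "w \<le> V (i-1)" unfolding w_def using i by (intro mono_l) auto
    moreover have "w \<le> V (i+1)" unfolding w_def using i by (intro mono_l) auto
    ultimately show "2*w \<le> (c-1) * V i" by linarith
  qed
  have h3: "real (p-s) * w \<le> real (2*(m-p)) * w"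
    using ps w0 by (intro mult_right_mono) auto
  show ?thesis using h1 h2 h3 by (simp add: sum_distrib_left[symmetric])
qed

lemma right_good:
  assumes "m \<le> q" "q \<le> t" "M \<le> q \<or> min t M - q \<le> 2*(q-m)"
  shows "(\<Sum>i\<in>{Suc q..<Suc t}. V i) \<le> (c-1) * (\<Sum>i\<in>{Suc m..<Suc q}. V i)"
proof (cases "M \<le> q")
  case True
  have "(\<Sum>i\<in>{Suc q..<Suc t}. V i) = 0" using True by (intro sum.neutral) (auto intro: zeroM)
  moreover have "0 \<le> (c-1) * (\<Sum>i\<in>{Suc m..<Suc q}. V i)" using c1 by (simp add: nonneg sum_nonneg)
  ultimately show ?thesis by simp
next
  case False
  define u where "u = min t M"
  have qu: "q \<le> u" "u - q \<le> 2*(q-m)" using False assms by (auto simp: u_def)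
  define w where "w = V (Suc q)"
  have w0: "0 \<le> w" by (simp add: w_def nonneg)
  have sp: "(\<Sum>i\<in>{Suc q..<Suc t}. V i) = (\<Sum>i\<in>{Suc q..<Suc u}. V i) + (\<Sum>i\<in>{Suc u..<Suc t}. V i)"
    using qu assms by (intro sum.atLeastLessThan_concat[symmetric]) (auto simp: u_def)
  have z: "(\<Sum>i\<in>{Suc u..<Suc t}. V i) = 0"
    by (intro sum.neutral ballI zeroM) (auto simp: u_def)
  have h1: "(\<Sum>i\<in>{Suc q..<Suc u}. V i) \<le> real (card {Suc q..<Suc u}) * w"
  proof (rule sum_bounded_above)
    fix i assume "i \<in> {Suc q..<Suc u}"
    then show "V i \<le> w" unfolding w_def using assms by (intro mono_r) auto
  qed
  have h2: "real (card {Suc m..<Suc q}) * (2*w) \<le> (\<Sum>i\<in>{Suc m..<Suc q}. (c-1) * V i)"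
  proof (rule sum_bounded_below)
    fix i assume i: "i \<in> {Suc m..<Suc q}"
    have "V (i-1) + V (i+1) \<le> (c-1) * V i" using i False by (intro k0) auto
    moreover have "w \<le> V (i-1)" unfolding w_def using i by (intro mono_r) auto
    moreover have "w \<le> V (i+1)" unfolding w_def using i by (intro mono_r) auto
    ultimately show "2*w \<le> (c-1) * V i" by linarith
  qed
  have h3: "real (u-q) * w \<le> real (2*(q-m)) * w"
    using qu w0 by (intro mult_right_mono) auto
  show ?thesis using sp z h1 h2 h3 by (simp add: sum_distrib_left[symmetric])
qed

lemma main:
  assumes y: "1 \<le> y" "y < M"
  shows "(\<Sum>i\<in>{y-(2*k+1)..<Suc (y+2*k+2)}. V i) - V (gpos m (y-(2*k+1)) (y+2*k+2))
         \<le> c * ((\<Sum>i\<in>{y-k..<Suc (y+k+1)}. V i) - V (gpos m (y-k) (y+k+1)))"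
proof -
  define p where "p = y-k"
  define q where "q = y+k+1"
  define s where "s = y-(2*k+1)"
  define t where "t = y+2*k+2"
  define I where "I = (\<Sum>i\<in>{p..<Suc q}. V i)"
  define J where "J = (\<Sum>i\<in>{s..<Suc t}. V i)"
  have ord: "s \<le> p" "p \<le> q" "q \<le> t" "p < Suc q" "s < Suc t" by (auto simp: p_def q_def s_def t_def)
  have CY: "J - V t \<le> c * (I - V q)"
  proof -
    have "(\<Sum>i\<in>{s..<t}. V i) \<le> c * (\<Sum>i\<in>{p..<q}. V i)"
      using cons[of y k] y unfolding s_def t_def p_def q_def by simp
    moreover have "J = (\<Sum>i\<in>{s..<t}. V i) + V t" unfolding J_def using ord by (simp add: sum.atLeastLessThan_Suc)
    moreover have "I = (\<Sum>i\<in>{p..<q}. V i) + V q" unfolding I_def using ord by (simp add: sum.atLeastLessThan_Suc)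
    ultimately show ?thesis by simp
  qed
  have CY1: "J - V s \<le> c * (I - V p)" if p1: "1 \<le> p"
  proof -
    have h: "(\<Sum>i\<in>{(y+1)-(2*k+1)..<(y+1)+2*k+2}. V i) \<le> c * (\<Sum>i\<in>{(y+1)-k..<(y+1)+k+1}. V i)"
      using y by (intro cons) auto
    have e1: "(y+1)+2*k+2 = Suc t" "(y+1)+k+1 = Suc q" "(y+1)-k = Suc p"
      using p1 by (auto simp: t_def q_def p_def)
    have e2: "I = V p + (\<Sum>i\<in>{Suc p..<Suc q}. V i)"
      unfolding I_def by (rule sum.atLeast_Suc_lessThan) (use ord in simp)
    have e3: "(\<Sum>i\<in>{(y+1)-(2*k+1)..<Suc t}. V i) = J - V s"
    proof (cases "2*k+1 \<le> y")
      case True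
      then have e: "(y+1)-(2*k+1) = Suc s" by (simp add: s_def)
      have "J = V s + (\<Sum>i\<in>{Suc s..<Suc t}. V i)"
        unfolding J_def by (rule sum.atLeast_Suc_lessThan) (use ord in simp)
      then show ?thesis unfolding e by simp
    next
      case False
      then have "(y+1)-(2*k+1) = s" "s = 0" by (auto simp: s_def)
      then show ?thesis unfolding J_def using zero0 by simp
    qed
    have "(\<Sum>i\<in>{(y+1)-(2*k+1)..<Suc t}. V i) \<le> c * (\<Sum>i\<in>{Suc p..<Suc q}. V i)"
      using h by (simp only: e1)
    then show ?thesis using e2 e3 by simp
  qed
  have gN: "V s \<le> V (gpos m s t)" "V t \<le> V (gpos m s t)" using ord by (auto intro: max_g)
  consider "m < p" | "q < m" | "p \<le> m" "m \<le> q" by linarith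
  then have "J - V (gpos m s t) \<le> c * (I - V (gpos m p q))"
  proof cases
    case 1
    then have "gpos m p q = p" using ord by (simp add: gpos_def)
    moreover have "1 \<le> p" using 1 m1 by simp
    ultimately show ?thesis using CY1 gN by simp
  next
    case 2
    then have "gpos m p q = q" using ord by (simp add: gpos_def)
    then show ?thesis using CY gN by simp
  next
    case 3
    have g1: "gpos m p q = m" using 3 by (auto simp: gpos_def)
    have g2: "gpos m s t = m" using 3 ord by (auto simp: gpos_def)
    define Lo where "Lo = (\<Sum>i\<in>{s..<p}. V i)"
    define L where "L = (\<Sum>i\<in>{p..<m}. V i)"
    define R where "R = (\<Sum>i\<in>{Suc m..<Suc q}. V i)"
    define Ro where "Ro = (\<Sum>i\<in>{Suc q..<Suc t}. V i)"
    have Id: "I = L + V m + R"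
    proof -
      have "I = L + (\<Sum>i\<in>{m..<Suc q}. V i)" unfolding I_def L_def using 3
        by (simp add: sum.atLeastLessThan_concat)
      moreover have "(\<Sum>i\<in>{m..<Suc q}. V i) = V m + R" unfolding R_def
        by (rule sum.atLeast_Suc_lessThan) (use 3 in simp)
      ultimately show ?thesis by simp
    qed
    have Jd: "J = Lo + I + Ro"
    proof -
      have "J = Lo + (\<Sum>i\<in>{p..<Suc t}. V i)" unfolding J_def Lo_def using ord
        by (simp add: sum.atLeastLessThan_concat)
      moreover have "(\<Sum>i\<in>{p..<Suc t}. V i) = I + Ro" unfolding I_def Ro_def
        by (rule sum.atLeastLessThan_concat[symmetric]) (use ord in simp_all)
      ultimately show ?thesis by simp
    qed
    have goal: "J - V m \<le> c * (I - V m)"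
    proof -
      have left: "Lo \<le> (c-1) * L \<or> J - V m \<le> c * (I - V m)"
      proof (cases "p = 0 \<or> p - s \<le> 2*(m-p)")
        case True
        then show ?thesis using left_good[of s p] ord 3 unfolding Lo_def L_def by simp
      next
        case False
        then have p1: "1 \<le> p" and d: "2*(m-p) \<le> p - s" by auto
        have th: "(V m - V p) * real (p-s) \<le> (V p - V s) * real (m-p)"
          using three[of s p m] ord 3 mM by simp
        have "c * (V m - V p) \<le> (V m - V p) + (V p - V s)"
        proof (rule alg[where d="real (p-s)" and e="real (m-p)"])
          show "0 \<le> V m - V p" using vmax[of p] by simp
          show "0 \<le> V m - V p + (V p - V s)" using vmax[of s] by simp
          show "2 * real (m-p) \<le> real (p-s)" using d by linarith
          show "real (m-p) = 0 \<Longrightarrow> V m - V p = 0" using 3 by simp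
        qed (use th c3 in auto)
        then show ?thesis using CY1[OF p1] by (simp add: algebra_simps)
      qed
      have right: "Ro \<le> (c-1) * R \<or> J - V m \<le> c * (I - V m)"
      proof (cases "M \<le> q \<or> min t M - q \<le> 2*(q-m)")
        case True
        then show ?thesis using right_good[of q t] ord 3 unfolding Ro_def R_def by simp
      next
        case False
        define K where "K = min t (M+1)"
        have qM: "q < M" and d: "2*(q-m) \<le> K - q" and qK: "q \<le> K" "K \<le> M+1"
          using False by (auto simp: K_def)
        have VK: "V K = V t"
        proof (cases "t \<le> M+1")
          case True then show ?thesis by (simp add: K_def)
        next
          case False then show ?thesis by (simp add: K_def zeroM)
        qed
        have th: "(V K - V q) * real (q-m) \<le> (V q - V m) * real (K-q)"
          using three[of m q K] 3 qK by simp
        have "c * (V m - V q) \<le> (V m - V q) + (V q - V K)"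
        proof (rule alg[where d="real (K-q)" and e="real (q-m)"])
          show "0 \<le> V m - V q" using vmax[of q] by simp
          show "0 \<le> V m - V q + (V q - V K)" using vmax[of K] by simp
          show "2 * real (q-m) \<le> real (K-q)" using d by linarith
          show "real (q-m) = 0 \<Longrightarrow> V m - V q = 0" using 3 by simp
          show "(V m - V q) * real (K - q) \<le> (V q - V K) * real (q - m)" using th by (simp add: algebra_simps)
        qed (use c3 in auto)
        then show ?thesis using CY VK by (simp add: algebra_simps)
      qed
      show ?thesis
      proof (cases "J - V m \<le> c * (I - V m)")
        case True then show ?thesis .
      next
        case False
        then have "Lo \<le> (c-1) * L" "Ro \<le> (c-1) * R" using left right by auto
        then show ?thesis using Id Jd by (simp add: algebra_simps)
      qed
    qed
    then show ?thesis using g1 g2 by simp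
  qed
  then show ?thesis unfolding I_def J_def p_def q_def s_def t_def by simp
qed

end

lemma pm_ball:
  "path_measure w (path_ball N z r) = (\<Sum>i\<in>{z-r..<Suc (z+r)}. (if 1 \<le> i \<and> i \<le> N then w i else 0))"
proof -
  have "path_ball N z r = {z-r..<Suc (z+r)} \<inter> {i. 1 \<le> i \<and> i \<le> N}"
    unfolding path_ball_def by auto
  then show ?thesis unfolding path_measure_def by (simp add: sum.inter_restrict)
qed

lemma ball_pos:
  assumes "is_path_measure N w" "x \<in> {1..N}"
  shows "0 < path_measure w (path_ball N x r)"
proof -
  have sub: "path_ball N x r \<subseteq> {1..N}" unfolding path_ball_def by auto
  have xin: "x \<in> path_ball N x r" using assms(2) unfolding path_ball_def by auto
  have fin: "finite (path_ball N x r)" using sub finite_subset by blast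
  have "w x \<le> path_measure w (path_ball N x r)" unfolding path_measure_def
    using xin fin sub assms(1) unfolding is_path_measure_def
    by (intro member_le_sum) (auto intro: less_imp_le)
  moreover have "0 < w x" using assms unfolding is_path_measure_def by auto
  ultimately show ?thesis by linarith
qed

definition RS :: "nat \<Rightarrow> (nat \<Rightarrow> real) \<Rightarrow> real set" where
  "RS N w = {path_measure w (path_ball N x (2*k+1)) / path_measure w (path_ball N x k) | x k. x \<in> {1..N}}"

lemma dc_RS: "doubling_const N w = Sup (RS N w)"
  unfolding doubling_const_def RS_def by simp

lemma RS_ne: "1 \<le> N \<Longrightarrow> RS N w \<noteq> {}"
  unfolding RS_def by auto

lemma RS_bdd:
  assumes "is_path_measure N w" "1 \<le> N"
  shows "bdd_above (RS N w)"
proof -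
  define T where "T = (\<Sum>i\<in>{1..N}. w i)"
  define mn where "mn = Min (w ` {1..N})"
  have mnpos: "0 < mn" unfolding mn_def using assms unfolding is_path_measure_def
    by (subst Min_gr_iff) auto
  have "r \<le> T / mn" if "r \<in> RS N w" for r
  proof -
    obtain x k where r: "r = path_measure w (path_ball N x (2*k+1)) / path_measure w (path_ball N x k)"
      and x: "x \<in> {1..N}" using \<open>r \<in> RS N w\<close> unfolding RS_def by auto
    have sub: "\<And>r. path_ball N x r \<subseteq> {1..N}" unfolding path_ball_def by auto
    have num: "path_measure w (path_ball N x (2*k+1)) \<le> T" unfolding path_measure_def T_def
      using sub assms(1) unfolding is_path_measure_def
      by (intro sum_mono2) (auto intro: less_imp_le)
    have "w x \<le> path_measure w (path_ball N x k)" unfolding path_measure_def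
      using x sub[of k] assms(1) unfolding is_path_measure_def path_ball_def
      by (intro member_le_sum) (auto intro: less_imp_le)
    moreover have "mn \<le> w x" unfolding mn_def using x by simp
    ultimately have den: "mn \<le> path_measure w (path_ball N x k)" by linarith
    have "0 \<le> path_measure w (path_ball N x (2*k+1))" using ball_pos[OF assms(1) x] by (simp add: less_imp_le)
    then show ?thesis unfolding r using num den mnpos by (intro frac_le) auto
  qed
  then show ?thesis unfolding bdd_above_def by blast
qed

lemma dc_ge:
  assumes "is_path_measure N w" "x \<in> {1..N}"
  shows "path_measure w (path_ball N x (2*k+1)) \<le> doubling_const N w * path_measure w (path_ball N x k)"
proof -
  have N1: "1 \<le> N" using assms by auto
  have "path_measure w (path_ball N x (2*k+1)) / path_measure w (path_ball N x k) \<le> doubling_const N w"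
    unfolding dc_RS using assms RS_bdd[OF assms(1) N1] by (intro cSup_upper) (auto simp: RS_def)
  then show ?thesis using ball_pos[OF assms] by (simp add: pos_divide_le_eq)
qed

lemma dc_nonneg:
  assumes "is_path_measure N w" "1 \<le> N"
  shows "0 \<le> doubling_const N w"
proof -
  have "0 \<le> path_measure w (path_ball N 1 (2*0+1))" using ball_pos[OF assms(1), of 1] assms by (simp add: less_imp_le)
  then have "0 \<le> doubling_const N w * path_measure w (path_ball N 1 0)"
    using dc_ge[OF assms(1), of 1 0] assms by simp
  then show ?thesis using ball_pos[OF assms(1), of 1 0] assms by (simp add: zero_le_mult_iff)
qed

lemma dc_le:
  assumes "1 \<le> N" "is_path_measure N w"
    and "\<And>x k. x \<in> {1..N} \<Longrightarrow> path_measure w (path_ball N x (2*k+1)) \<le> C * path_measure w (path_ball N x k)"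
  shows "doubling_const N w \<le> C"
  unfolding dc_RS
proof (rule cSup_least)
  show "RS N w \<noteq> {}" using RS_ne assms by simp
  fix r assume "r \<in> RS N w"
  then obtain x k where r: "r = path_measure w (path_ball N x (2*k+1)) / path_measure w (path_ball N x k)"
    and x: "x \<in> {1..N}" unfolding RS_def by auto
  show "r \<le> C" unfolding r using assms(3)[OF x] ball_pos[OF assms(2) x] by (simp add: pos_divide_le_eq)
qed

lemma ball_card:
  assumes "x \<in> {1..N}"
  shows "path_ball N x r = {max 1 (x-r)..min N (x+r)}"
  using assms unfolding path_ball_def by auto

lemma const_le3:
  assumes "1 \<le> N"
  shows "doubling_const N (\<lambda>_. 1) \<le> 3"
proof (rule dc_le[OF assms])
  show "is_path_measure N (\<lambda>_. 1)" unfolding is_path_measure_def by simp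
  fix x k assume x: "x \<in> {1..N}"
  define A where "A = max 1 (x-(2*k+1))"
  define B where "B = min N (x+(2*k+1))"
  define a where "a = max 1 (x-k)"
  define b where "b = min N (x+k)"
  have f: "1 \<le> A" "A \<le> a" "a \<le> x" "x \<le> b" "b \<le> B" "B \<le> N" "x \<le> A + (2*k+1)" "B \<le> x + (2*k+1)"
    using x by (auto simp: A_def B_def a_def b_def)
  have ga: "a = 1 \<or> a + k = x" unfolding a_def by linarith
  have gb: "b = N \<or> b = x + k" unfolding b_def by linarith
  have l: "a - A \<le> Suc b - a"
    using ga f by (cases "a = 1") auto
  have r: "B - b \<le> Suc b - a"
    using gb f by (cases "b = N") auto
  have "Suc B - A \<le> 3 * (Suc b - a)" using l r f by linarith
  then have "card {max 1 (x-(2*k+1))..min N (x+(2*k+1))} \<le> 3 * card {max 1 (x-k)..min N (x+k)}"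
    unfolding A_def [symmetric] B_def [symmetric] a_def [symmetric] b_def [symmetric] by simp
  then have "real (card {max 1 (x-(2*k+1))..min N (x+(2*k+1))}) \<le> 3 * real (card {max 1 (x-k)..min N (x+k)})"
    by linarith
  then show "path_measure (\<lambda>_. 1) (path_ball N x (2*k+1)) \<le> 3 * path_measure (\<lambda>_. 1) (path_ball N x k)"
    unfolding path_measure_def ball_card[OF x] by simp
qed


theorem proposition5p2:
  fixes n :: nat
  assumes "n \<ge> 1"
  shows "path_doubling_const n \<le> path_doubling_const (n + 1)"
proof -
  define P where "P N = doubling_const N ` {\<mu>. is_path_measure N \<mu>}" for N
  have bddP: "bdd_below (P n)" unfolding P_def bdd_below_def using dc_nonneg assms by blast
  have key: "\<exists>\<mu>. is_path_measure n \<mu> \<and> doubling_const n \<mu> \<le> doubling_const (n+1) \<nu>"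
    if nu: "is_path_measure (n+1) \<nu>" for \<nu>
  proof (cases "3 \<le> doubling_const (n+1) \<nu>")
    case True
    show ?thesis
      by (rule exI[of _ "\<lambda>_. 1"]) (use const_le3[of n] assms True in \<open>auto simp: is_path_measure_def\<close>)
  next
    case False
    define M where "M = n+1"
    define c where "c = doubling_const (n+1) \<nu>"
    define V where "V i = (if 1 \<le> i \<and> i \<le> M then \<nu> i else 0)" for i
    have fin: "finite (\<nu> ` {1..M})" "\<nu> ` {1..M} \<noteq> {}" using assms by (auto simp: M_def)
    obtain m where m: "m \<in> {1..M}" "\<nu> m = Max (\<nu> ` {1..M})"
      using Max_in[OF fin] by auto
    have numax: "\<And>i. i \<in> {1..M} \<Longrightarrow> \<nu> i \<le> \<nu> m" using m fin by simp
    have nupos: "\<And>i. 1 \<le> i \<Longrightarrow> i \<le> M \<Longrightarrow> 0 < \<nu> i" using nu unfolding is_path_measure_def M_def by auto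
    interpret dm M V m c
    proof
      show "2 \<le> M" using assms by (simp add: M_def)
      show "\<And>i. 1 \<le> i \<Longrightarrow> i \<le> M \<Longrightarrow> 0 < V i" using nupos by (simp add: V_def)
      show "V 0 = 0" by (simp add: V_def)
      show "\<And>i. M < i \<Longrightarrow> V i = 0" by (simp add: V_def)
      show "1 \<le> m" "m \<le> M" using m by auto
      have "0 < \<nu> m" using nupos m(1) by simp
      then show "\<And>i. V i \<le> V m" using numax m(1) by (auto simp: V_def)
      show "c \<le> 3" using False by (simp add: c_def)
      fix z r :: nat assume z: "1 \<le> z" "z \<le> M"
      have "path_measure \<nu> (path_ball M z (2*r+1)) \<le> c * path_measure \<nu> (path_ball M z r)"
        unfolding c_def M_def using dc_ge[OF nu, of z r] z by (simp add: M_def)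
      then show "(\<Sum>i\<in>{z-(2*r+1)..<z+2*r+2}. V i) \<le> c * (\<Sum>i\<in>{z-r..<z+r+1}. V i)"
        unfolding pm_ball V_def by simp
    qed
    define \<mu> where "\<mu> i = \<nu> (fdel m i)" for i
    have mup: "is_path_measure n \<mu>"
      unfolding is_path_measure_def \<mu>_def using nupos by (auto simp: fdel_def M_def)
    have ext: "(if 1 \<le> i \<and> i \<le> n then \<mu> i else 0) = V (fdel m i)" for i
      using m by (auto simp: \<mu>_def V_def fdel_def M_def)
    have pmu: "path_measure \<mu> (path_ball n y r) = (\<Sum>i\<in>{y-r..<Suc (Suc (y+r))}. V i) - V (gpos m (y-r) (Suc (y+r)))" for y r
    proof -
      have "path_measure \<mu> (path_ball n y r) = (\<Sum>i\<in>{y-r..<Suc (y+r)}. V (fdel m i))"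
        unfolding pm_ball ext by simp
      moreover have "y - r \<le> Suc (y+r)" by simp
      ultimately show ?thesis using sum_fdel[of "y-r" "Suc (y+r)" V m] by linarith
    qed
    have "doubling_const n \<mu> \<le> c"
    proof (rule dc_le[OF assms mup])
      fix x k assume x: "x \<in> {1..n}"
      have "1 \<le> x" "x < M" using x by (auto simp: M_def)
      from main[OF this, of k]
      show "path_measure \<mu> (path_ball n x (2*k+1)) \<le> c * path_measure \<mu> (path_ball n x k)"
        unfolding pmu by (simp add: add.assoc)
    qed
    then show ?thesis using mup by (auto simp: c_def)
  qed
  have "is_path_measure (n+1) (\<lambda>_. 1)" by (simp add: is_path_measure_def)
  then have ne: "P (n+1) \<noteq> {}" unfolding P_def by blast
  have "Inf (P n) \<le> Inf (P (n+1))"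
  proof (rule cInf_greatest[OF ne])
    fix d assume "d \<in> P (n+1)"
    then obtain \<nu> where nu: "is_path_measure (n+1) \<nu>" "d = doubling_const (n+1) \<nu>" unfolding P_def by auto
    obtain \<mu> where mu: "is_path_measure n \<mu>" "doubling_const n \<mu> \<le> d" using key[OF nu(1)] nu(2) by auto
    have "Inf (P n) \<le> doubling_const n \<mu>" using bddP mu(1) unfolding P_def by (intro cInf_lower) auto
    then show "Inf (P n) \<le> d" using mu(2) by linarith
  qed
  then show ?thesis unfolding path_doubling_const_def P_def by simp
qed

end
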